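(* Let $b,c$ be rational numbers with $0<b\le b_\sigma$. For each $u\in\mathbf{Z}^n_{\ge0}$ with $0\le u_i<q$ for all $i$, the basic Dwork operator $\Theta_u$ satisfies $\Theta_u(L(b,c))\subseteq L(qb,c)$. In particular, each $\Theta_u$ maps $A$ into $A$.
   Context: $R$ is a complete discrete valuation ring of characteristic $0$ with uniformizer $\pi$, residue field $\mathbf{F}_q$ ($q$ a power of $p$), valuation $\mathrm{ord}_\pi$. Fix $n\ge1$; for $u\in\mathbf{Z}^n_{\ge0}$, $X^u=\prod X_i^{u_i}$, $|u|=\sum u_i$. $A_0=\{\sum a_uX^u:a_u\in R,\ \mathrm{ord}_\pi a_u\to\infty\}$, $A=\{\sum a_uX^u\in A_0:\liminf_{|u|\to\infty}\mathrm{ord}_\pi a_u/|u|>0\}$. $\sigma$ is an $R$-algebra endomorphism of $A_0$ with $\sigma(X_i)=X_i^q+\pi f_i$, $f_i\in A$. For rational $b>0$ and $c$, $L(b,c)=\{\sum_va_vX^v:a_v\in R,\ \mathrm{ord}_\pi a_v\ge b|v|+c\}$. $b_\sigma>0$ is a fixed rational number with $\pi f_i\in L(b_\sigma,0)$ for $1\le i\le n$. The ring $A_0$ is a free $\sigma(A_0)$-module with basis $\{X^u:0\le u_i<q\}$, so every $f\in A_0$ is uniquely $f=\sum_{0\le u_i<q}\sigma(\Theta_u(f))X^u$ with $\Theta_u(f)\in A_0$; these maps $\Theta_u$ are the basic Dwork operators. *)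

theory Defs
  imports Complex_Main "HOL-Computational_Algebra.Primes"
begin

text \<open>Power series in the n variables X_0,...,X_{n-1} over R. An exponent vector
  u in Z^n_{\<ge>0} is a function nat => nat vanishing at indices \<ge> n.\<close>

type_synonym 'r ps = "(nat \<Rightarrow> nat) \<Rightarrow> 'r"

definition exps :: "nat \<Rightarrow> (nat \<Rightarrow> nat) set" where
  "exps n = {u. \<forall>i\<ge>n. u i = 0}"

definition deg :: "nat \<Rightarrow> (nat \<Rightarrow> nat) \<Rightarrow> nat" where
  "deg n u = (\<Sum>i<n. u i)"

definition box :: "nat \<Rightarrow> nat \<Rightarrow> (nat \<Rightarrow> nat) set" where
  "box n q = {u \<in> exps n. \<forall>i<n. u i < q}"

definition is_ps :: "nat \<Rightarrow> 'r::zero ps \<Rightarrow> bool" where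
  "is_ps n f \<longleftrightarrow> (\<forall>u. u \<notin> exps n \<longrightarrow> f u = 0)"

definition mono :: "(nat \<Rightarrow> nat) \<Rightarrow> 'r::{zero,one} ps" where
  "mono u = (\<lambda>v. if v = u then 1 else 0)"

definition const :: "'r::zero \<Rightarrow> 'r ps" where
  "const c = (\<lambda>v. if v = (\<lambda>_. 0) then c else 0)"

definition var :: "nat \<Rightarrow> 'r::{zero,one} ps" where
  "var i = mono (\<lambda>j. if j = i then 1 else 0)"

definition psmult :: "'r::comm_ring_1 ps \<Rightarrow> 'r ps \<Rightarrow> 'r ps" where
  "psmult f g = (\<lambda>u. \<Sum>v\<in>{v. \<forall>i. v i \<le> u i}. f v * g (\<lambda>i. u i - v i))"

definition psadd :: "'r::comm_ring_1 ps \<Rightarrow> 'r ps \<Rightarrow> 'r ps" where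
  "psadd f g = (\<lambda>u. f u + g u)"

definition pssmult :: "'r::comm_ring_1 \<Rightarrow> 'r ps \<Rightarrow> 'r ps" where
  "pssmult c f = (\<lambda>u. c * f u)"

text \<open>A complete discrete valuation ring of characteristic 0 (the characteristic is
  imposed by the type class), with normalized valuation ord (on nonzero elements),
  uniformizer \<pi> and residue field with q elements, q = p^k a prime power.\<close>
definition cdvr :: "('r::{idom,ring_char_0} \<Rightarrow> nat) \<Rightarrow> 'r \<Rightarrow> nat \<Rightarrow> nat \<Rightarrow> bool" where
  "cdvr ord \<pi> p q \<longleftrightarrow>
     (\<forall>x y. x \<noteq> 0 \<longrightarrow> y \<noteq> 0 \<longrightarrow> ord (x * y) = ord x + ord y) \<and>
     (\<forall>x y. x \<noteq> 0 \<longrightarrow> y \<noteq> 0 \<longrightarrow> x + y \<noteq> 0 \<longrightarrow> ord (x + y) \<ge> min (ord x) (ord y)) \<and>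
     (\<forall>x y. x \<noteq> 0 \<longrightarrow> y \<noteq> 0 \<longrightarrow> ord x \<le> ord y \<longrightarrow> x dvd y) \<and>
     (\<forall>x. x \<noteq> 0 \<longrightarrow> (ord x = 0 \<longleftrightarrow> x dvd 1)) \<and>
     \<pi> \<noteq> 0 \<and> ord \<pi> = 1 \<and>
     (\<forall>s::nat \<Rightarrow> 'r.
        (\<forall>N. \<exists>M. \<forall>i\<ge>M. \<forall>j\<ge>M. s i = s j \<or> ord (s i - s j) \<ge> N) \<longrightarrow>
        (\<exists>l. \<forall>N. \<exists>M. \<forall>i\<ge>M. s i = l \<or> ord (s i - l) \<ge> N)) \<and>
     prime p \<and> (\<exists>k\<ge>1. q = p ^ k) \<and>
     (\<exists>S. finite S \<and> card S = q \<and> (\<forall>x. \<exists>!s\<in>S. \<pi> dvd (x - s)))"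

definition A0 :: "nat \<Rightarrow> ('r::zero \<Rightarrow> nat) \<Rightarrow> 'r ps set" where
  "A0 n ord = {f. is_ps n f \<and> (\<forall>N. finite {u. f u \<noteq> 0 \<and> ord (f u) < N})}"

definition A :: "nat \<Rightarrow> ('r::zero \<Rightarrow> nat) \<Rightarrow> 'r ps set" where
  "A n ord = {f \<in> A0 n ord. \<exists>e::real. e > 0 \<and> (\<exists>M. \<forall>u\<in>exps n. deg n u \<ge> M \<longrightarrow>
       f u = 0 \<or> real (ord (f u)) \<ge> e * real (deg n u))}"

definition L :: "nat \<Rightarrow> ('r::zero \<Rightarrow> nat) \<Rightarrow> rat \<Rightarrow> rat \<Rightarrow> 'r ps set" where
  "L n ord b c = {f. is_ps n f \<and> (\<forall>u\<in>exps n.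
       f u = 0 \<or> real (ord (f u)) \<ge> real_of_rat b * real (deg n u) + real_of_rat c)}"

definition frob_lift :: "nat \<Rightarrow> ('r::comm_ring_1 \<Rightarrow> nat) \<Rightarrow> 'r \<Rightarrow> nat \<Rightarrow>
    ('r ps \<Rightarrow> 'r ps) \<Rightarrow> (nat \<Rightarrow> 'r ps) \<Rightarrow> rat \<Rightarrow> bool" where
  "frob_lift n ord \<pi> q \<sigma> fs b\<sigma> \<longleftrightarrow>
     (\<forall>f\<in>A0 n ord. \<sigma> f \<in> A0 n ord) \<and>
     (\<forall>f\<in>A0 n ord. \<forall>g\<in>A0 n ord. \<sigma> (psadd f g) = psadd (\<sigma> f) (\<sigma> g)) \<and>
     (\<forall>f\<in>A0 n ord. \<forall>g\<in>A0 n ord. \<sigma> (psmult f g) = psmult (\<sigma> f) (\<sigma> g)) \<and>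
     (\<forall>c. \<forall>f\<in>A0 n ord. \<sigma> (pssmult c f) = pssmult c (\<sigma> f)) \<and>
     \<sigma> (const 1) = const 1 \<and>
     b\<sigma> > 0 \<and>
     (\<forall>i<n. fs i \<in> A n ord \<and> pssmult \<pi> (fs i) \<in> L n ord b\<sigma> 0 \<and>
        \<sigma> (var i) = psadd (mono (\<lambda>j. if j = i then q else 0)) (pssmult \<pi> (fs i)))"

definition decomp :: "nat \<Rightarrow> ('r::comm_ring_1 \<Rightarrow> nat) \<Rightarrow> nat \<Rightarrow> ('r ps \<Rightarrow> 'r ps) \<Rightarrow>
    'r ps \<Rightarrow> ((nat \<Rightarrow> nat) \<Rightarrow> 'r ps) \<Rightarrow> bool" where
  "decomp n ord q \<sigma> f g \<longleftrightarrow>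
     (\<forall>u\<in>box n q. g u \<in> A0 n ord) \<and> (\<forall>u. u \<notin> box n q \<longrightarrow> g u = (\<lambda>_. 0)) \<and>
     f = (\<lambda>w. \<Sum>u\<in>box n q. psmult (\<sigma> (g u)) (mono u) w)"

definition Theta :: "nat \<Rightarrow> ('r::comm_ring_1 \<Rightarrow> nat) \<Rightarrow> nat \<Rightarrow> ('r ps \<Rightarrow> 'r ps) \<Rightarrow>
    (nat \<Rightarrow> nat) \<Rightarrow> 'r ps \<Rightarrow> 'r ps" where
  "Theta n ord q \<sigma> u f = (THE g. decomp n ord q \<sigma> f g) u"

end

theory Submission imports Defs "HOL-Library.FuncSet" begin

definition big :: "('r::zero \<Rightarrow> nat) \<Rightarrow> real \<Rightarrow> 'r \<Rightarrow> bool" where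
  "big ord K x \<longleftrightarrow> x = 0 \<or> K \<le> real (ord x)"

definition Lr :: "nat \<Rightarrow> ('r::zero \<Rightarrow> nat) \<Rightarrow> real \<Rightarrow> real \<Rightarrow> 'r ps set" where
  "Lr n ord b c = {f. is_ps n f \<and> (\<forall>u\<in>exps n. big ord (b * real (deg n u) + c) (f u))}"

lemma L_Lr: "L n ord b c = Lr n ord (real_of_rat b) (real_of_rat c)"
  unfolding L_def Lr_def big_def by auto

locale Dw =
  fixes n :: nat and ord :: "'r::{idom,ring_char_0} \<Rightarrow> nat" and \<pi> :: 'r
    and p q :: nat and \<sigma> :: "'r ps \<Rightarrow> 'r ps" and fs :: "nat \<Rightarrow> 'r ps" and b\<sigma> :: rat
  assumes cd: "cdvr ord \<pi> p q" and fl: "frob_lift n ord \<pi> q \<sigma> fs b\<sigma>"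
    and free: "\<forall>f\<in>A0 n ord. \<exists>!g. decomp n ord q \<sigma> f g"
begin

lemma ord_mult: "x \<noteq> 0 \<Longrightarrow> y \<noteq> 0 \<Longrightarrow> ord (x * y) = ord x + ord y"
  using cd[unfolded cdvr_def, THEN conjunct1] by blast
lemma ord_add: "x \<noteq> 0 \<Longrightarrow> y \<noteq> 0 \<Longrightarrow> x + y \<noteq> 0 \<Longrightarrow> ord (x + y) \<ge> min (ord x) (ord y)"
  using cd[unfolded cdvr_def, THEN conjunct2, THEN conjunct1] by blast
lemma ord_dvd: "x \<noteq> 0 \<Longrightarrow> y \<noteq> 0 \<Longrightarrow> ord x \<le> ord y \<Longrightarrow> x dvd y"
  using cd[unfolded cdvr_def, THEN conjunct2, THEN conjunct2, THEN conjunct1] by blast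
lemma ord_unit: "x \<noteq> 0 \<Longrightarrow> (ord x = 0 \<longleftrightarrow> x dvd 1)"
  using cd[unfolded cdvr_def, THEN conjunct2, THEN conjunct2, THEN conjunct2, THEN conjunct1] by blast
lemma pi_nz: "\<pi> \<noteq> 0" and ord_pi: "ord \<pi> = 1"
  using cd[unfolded cdvr_def, THEN conjunct2, THEN conjunct2, THEN conjunct2, THEN conjunct2] by (simp_all only: simp_thms)
lemma q_pos: "q > 0"
proof -
  have "prime p \<and> (\<exists>k\<ge>1. q = p ^ k)" using cd[unfolded cdvr_def] by (elim conjE) (intro conjI)
  then show ?thesis using prime_gt_0_nat by auto
qed
lemma ord_one: "ord 1 = 0" using ord_unit[of 1] by simp
lemma ord_neg: "ord (- x) = ord x"
proof (cases "x = 0")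
  case False
  have u: "ord (-1) = 0" using ord_unit[of "-1"] by simp
  have "ord ((-1) * x) = ord (-1) + ord x" by (rule ord_mult) (use False in auto)
  then show ?thesis using u by simp
qed simp

lemma pi_dvd: "x \<noteq> 0 \<Longrightarrow> ord x \<ge> 1 \<Longrightarrow> \<pi> dvd x"
  using ord_dvd[of \<pi> x] pi_nz ord_pi by simp

lemma big_zero[simp]: "big ord K 0" unfolding big_def by simp
lemma big_mono: "big ord K x \<Longrightarrow> K' \<le> K \<Longrightarrow> big ord K' x"
  unfolding big_def by auto
lemma big_neg: "big ord K x \<Longrightarrow> big ord K (- x)"
  unfolding big_def using ord_neg by auto
lemma big_add: "big ord K x \<Longrightarrow> big ord K y \<Longrightarrow> big ord K (x + y)"
  unfolding big_def
proof (elim disjE)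
  assume a: "K \<le> real (ord x)" "K \<le> real (ord y)"
  show "x + y = 0 \<or> K \<le> real (ord (x + y))"
  proof (cases "x = 0 \<or> y = 0 \<or> x + y = 0")
    case True then show ?thesis using a by auto
  next
    case False
    then have "ord (x + y) \<ge> min (ord x) (ord y)" using ord_add by blast
    then show ?thesis using a by (auto simp: min_def split: if_splits)
  qed
qed auto
lemma big_diff: "big ord K x \<Longrightarrow> big ord K y \<Longrightarrow> big ord K (x - y)"
  using big_add[of K x "-y"] big_neg[of K y] by simp
lemma big_mult: "big ord K x \<Longrightarrow> big ord K' y \<Longrightarrow> big ord (K + K') (x * y)"
  unfolding big_def
proof -
  assume "x = 0 \<or> K \<le> real (ord x)" "y = 0 \<or> K' \<le> real (ord y)"
  then show "x * y = 0 \<or> K + K' \<le> real (ord (x * y))"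
    by (cases "x = 0"; cases "y = 0") (auto simp: ord_mult)
qed
lemma big_sum: "finite T \<Longrightarrow> (\<And>s. s \<in> T \<Longrightarrow> big ord K (h s)) \<Longrightarrow> big ord K (\<Sum>s\<in>T. h s)"
  by (induction T rule: finite_induct) (auto intro: big_add)
lemma big_pi: "big ord K x \<Longrightarrow> big ord (K + 1) (\<pi> * x)"
  using big_mult[of 1 \<pi> K x] ord_pi pi_nz unfolding big_def by (auto simp: algebra_simps)
lemma big_ord: "big ord (real (ord x)) x" unfolding big_def by simp


lemma finite_exps_deg: "finite {u \<in> exps n. deg n u \<le> K}"
proof -
  let ?S = "{u \<in> exps n. deg n u \<le> K}"
  have inj: "inj_on (\<lambda>u. restrict u {..<n}) ?S"
  proof (rule inj_onI)
    fix u v assume uv: "u \<in> ?S" "v \<in> ?S" "restrict u {..<n} = restrict v {..<n}"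
    show "u = v"
    proof
      fix i show "u i = v i"
      proof (cases "i < n")
        case True
        have "restrict u {..<n} i = restrict v {..<n} i" using uv(3) by simp
        then show ?thesis using True by simp
      next
        case False then show ?thesis using uv(1,2) by (auto simp: exps_def)
      qed
    qed
  qed
  have "(\<lambda>u. restrict u {..<n}) ` ?S \<subseteq> PiE {..<n} (\<lambda>_. {..K})"
  proof
    fix x assume "x \<in> (\<lambda>u. restrict u {..<n}) ` ?S"
    then obtain u where u: "u \<in> ?S" "x = restrict u {..<n}" by blast
    have "\<And>i. i < n \<Longrightarrow> u i \<le> K"
    proof -
      fix i assume "i < n"
      then have "u i \<le> (\<Sum>j<n. u j)" by (intro member_le_sum) auto
      then show "u i \<le> K" using u by (auto simp: deg_def)
    qed
    then show "x \<in> PiE {..<n} (\<lambda>_. {..K})" using u by auto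
  qed
  then have "finite ((\<lambda>u. restrict u {..<n}) ` ?S)" by (rule finite_subset) (rule finite_PiE, auto)
  then show ?thesis using finite_imageD inj by blast
qed

lemma le_exps: "u \<in> exps n \<Longrightarrow> \<forall>i. v i \<le> u i \<Longrightarrow> v \<in> exps n"
proof -
  assume u: "u \<in> exps n" and v: "\<forall>i. v i \<le> u i"
  show ?thesis unfolding exps_def
  proof (intro CollectI allI impI)
    fix i assume "n \<le> i"
    then have "u i = 0" using u by (simp add: exps_def)
    then show "v i = 0" using v by (metis le_zero_eq)
  qed
qed
lemma sub_exps: "u \<in> exps n \<Longrightarrow> (\<lambda>i. u i - v i) \<in> exps n"
  unfolding exps_def by auto
lemma deg_sub: "\<forall>i. v i \<le> u i \<Longrightarrow> deg n v + deg n (\<lambda>i. u i - v i) = deg n u"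
proof -
  assume v: "\<forall>i. v i \<le> u i"
  have "deg n v + deg n (\<lambda>i. u i - v i) = (\<Sum>i<n. v i + (u i - v i))"
    unfolding deg_def by (rule sum.distrib[symmetric])
  also have "\<dots> = deg n u" unfolding deg_def using v by (intro sum.cong) auto
  finally show ?thesis .
qed
lemma finite_le: "u \<in> exps n \<Longrightarrow> finite {v. \<forall>i. v i \<le> u i}"
proof -
  assume u: "u \<in> exps n"
  have "{v. \<forall>i. v i \<le> u i} \<subseteq> {v \<in> exps n. deg n v \<le> deg n u}"
  proof
    fix v assume v: "v \<in> {v. \<forall>i. v i \<le> u i}"
    then show "v \<in> {v \<in> exps n. deg n v \<le> deg n u}"
      using le_exps[OF u] deg_sub[of v u] by auto
  qed
  then show ?thesis using finite_exps_deg finite_subset by blast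
qed

lemma psmult_out: "is_ps n f \<Longrightarrow> is_ps n g \<Longrightarrow> u \<notin> exps n \<Longrightarrow> psmult f g u = 0"
proof -
  assume f: "is_ps n f" and g: "is_ps n g" and u: "u \<notin> exps n"
  then obtain i where i: "i \<ge> n" "u i \<noteq> 0" by (auto simp: exps_def)
  have "f v * g (\<lambda>i. u i - v i) = 0" if "\<forall>i. v i \<le> u i" for v
  proof (cases "v i = 0")
    case True
    then have "(\<lambda>i. u i - v i) \<notin> exps n" using i by (auto simp: exps_def)
    then show ?thesis using g by (simp add: is_ps_def)
  next
    case False
    then have "v \<notin> exps n" using i by (auto simp: exps_def)
    then show ?thesis using f by (simp add: is_ps_def)
  qed
  then show ?thesis unfolding psmult_def by (intro sum.neutral) auto
qed

lemma psmult_is_ps: "is_ps n f \<Longrightarrow> is_ps n g \<Longrightarrow> is_ps n (psmult f g)"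
  using psmult_out unfolding is_ps_def by blast

lemma Lr_mult: "f \<in> Lr n ord b c1 \<Longrightarrow> g \<in> Lr n ord b c2 \<Longrightarrow> psmult f g \<in> Lr n ord b (c1 + c2)"
proof -
  assume f: "f \<in> Lr n ord b c1" and g: "g \<in> Lr n ord b c2"
  have "big ord (b * real (deg n u) + (c1 + c2)) (psmult f g u)" if u: "u \<in> exps n" for u
    unfolding psmult_def
  proof (rule big_sum[OF finite_le[OF u]])
    fix v assume "v \<in> {v. \<forall>i. v i \<le> u i}"
    then have v: "\<forall>i. v i \<le> u i" by simp
    have ve: "v \<in> exps n" using le_exps[OF u v] .
    have we: "(\<lambda>i. u i - v i) \<in> exps n" using sub_exps[OF u] .
    have d: "real (deg n v) + real (deg n (\<lambda>i. u i - v i)) = real (deg n u)"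
      using deg_sub[OF v] by (metis of_nat_add)
    have "big ord ((b * real (deg n v) + c1) + (b * real (deg n (\<lambda>i. u i - v i)) + c2)) (f v * g (\<lambda>i. u i - v i))"
      using f g ve we by (intro big_mult) (auto simp: Lr_def)
    moreover have "(b * real (deg n v) + c1) + (b * real (deg n (\<lambda>i. u i - v i)) + c2) = b * real (deg n u) + (c1 + c2)"
      using d by (simp add: algebra_simps flip: d)
    ultimately show "big ord (b * real (deg n u) + (c1 + c2)) (f v * g (\<lambda>i. u i - v i))" by simp
  qed
  moreover have "is_ps n (psmult f g)" using f g psmult_is_ps by (auto simp: Lr_def)
  ultimately show ?thesis by (auto simp: Lr_def)
qed

lemma Lr_add: "f \<in> Lr n ord b c \<Longrightarrow> g \<in> Lr n ord b c \<Longrightarrow> psadd f g \<in> Lr n ord b c"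
  unfolding Lr_def psadd_def is_ps_def by (auto intro: big_add)
lemma Lr_diff: "f \<in> Lr n ord b c \<Longrightarrow> g \<in> Lr n ord b c \<Longrightarrow> (\<lambda>v. f v - g v) \<in> Lr n ord b c"
  unfolding Lr_def is_ps_def by (auto intro: big_diff)
lemma Lr_sum: "finite T \<Longrightarrow> (\<And>s. s \<in> T \<Longrightarrow> h s \<in> Lr n ord b c) \<Longrightarrow> (\<lambda>v. \<Sum>s\<in>T. h s v) \<in> Lr n ord b c"
  unfolding Lr_def is_ps_def by (auto intro!: big_sum)
lemma Lr_smult: "f \<in> Lr n ord b c \<Longrightarrow> a \<noteq> 0 \<Longrightarrow> pssmult a f \<in> Lr n ord b (c + real (ord a))"
proof -
  assume f: "f \<in> Lr n ord b c" and a: "a \<noteq> 0"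
  have "big ord (b * real (deg n u) + (c + real (ord a))) (a * f u)" if "u \<in> exps n" for u
    using big_mult[OF big_ord[of a] bspec[OF f[unfolded Lr_def, THEN CollectD, THEN conjunct2] that]]
    by (simp add: algebra_simps)
  then show ?thesis using f unfolding Lr_def pssmult_def is_ps_def by auto
qed
lemma big_smult0: "big ord K x \<Longrightarrow> big ord K (a * x)"
  using big_mult[OF big_ord[of a], of K x] unfolding big_def by auto
lemma Lr_smult0: "f \<in> Lr n ord b c \<Longrightarrow> pssmult a f \<in> Lr n ord b c"
  unfolding Lr_def pssmult_def is_ps_def by (auto intro: big_smult0)
lemma Lr_anti: "f \<in> Lr n ord b c \<Longrightarrow> b' \<le> b \<Longrightarrow> c' \<le> c \<Longrightarrow> f \<in> Lr n ord b' c'"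
proof -
  assume f: "f \<in> Lr n ord b c" and bb: "b' \<le> b" and cc: "c' \<le> c"
  have "b' * real (deg n u) + c' \<le> b * real (deg n u) + c" for u
    using bb cc mult_right_mono[OF bb, of "real (deg n u)"] by simp
  then show ?thesis using f unfolding Lr_def by (auto intro: big_mono)
qed
lemma mono_Lr: "u \<in> exps n \<Longrightarrow> mono u \<in> Lr n ord b (- b * real (deg n u))"
  unfolding Lr_def Defs.mono_def is_ps_def big_def by (auto simp: ord_one)

lemma Lr_A0: "b > 0 \<Longrightarrow> f \<in> Lr n ord b c \<Longrightarrow> f \<in> A0 n ord"
proof -
  assume b: "b > 0" and f: "f \<in> Lr n ord b c"
  have "finite {u. f u \<noteq> 0 \<and> ord (f u) < N}" for N
  proof -
    obtain K :: nat where K: "(real N - c) / b \<le> real K" using real_arch_simple by blast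
    have "{u. f u \<noteq> 0 \<and> ord (f u) < N} \<subseteq> {u \<in> exps n. deg n u \<le> K}"
    proof
      fix u assume u: "u \<in> {u. f u \<noteq> 0 \<and> ord (f u) < N}"
      then have ue: "u \<in> exps n" using f by (auto simp: Lr_def is_ps_def)
      then have "b * real (deg n u) + c \<le> real (ord (f u))" using f u by (auto simp: Lr_def big_def)
      moreover have "real (ord (f u)) < real N" using u by simp
      ultimately have "b * real (deg n u) + c < real N" by linarith
      then have "real (deg n u) < (real N - c) / b" using b by (simp add: field_simps)
      then show "u \<in> {u \<in> exps n. deg n u \<le> K}" using K ue by simp
    qed
    then show ?thesis using finite_exps_deg finite_subset by blast
  qed
  then show ?thesis using f by (auto simp: A0_def Lr_def)
qed

lemma A0_add: "f \<in> A0 n ord \<Longrightarrow> g \<in> A0 n ord \<Longrightarrow> psadd f g \<in> A0 n ord"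
proof -
  assume f: "f \<in> A0 n ord" and g: "g \<in> A0 n ord"
  have "{u. psadd f g u \<noteq> 0 \<and> ord (psadd f g u) < N} \<subseteq>
        {u. f u \<noteq> 0 \<and> ord (f u) < N} \<union> {u. g u \<noteq> 0 \<and> ord (g u) < N}" for N
  proof
    fix u assume u: "u \<in> {u. psadd f g u \<noteq> 0 \<and> ord (psadd f g u) < N}"
    have "big ord (real (min (ord (f u)) (ord (g u)))) (f u)"
         "big ord (real (min (ord (f u)) (ord (g u)))) (g u)"
      by (auto simp: big_def)
    then have "big ord (real (min (ord (f u)) (ord (g u)))) (f u + g u)" by (rule big_add)
    then show "u \<in> {u. f u \<noteq> 0 \<and> ord (f u) < N} \<union> {u. g u \<noteq> 0 \<and> ord (g u) < N}"
      using u by (cases "f u = 0"; cases "g u = 0") (auto simp: psadd_def big_def)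
  qed
  moreover have "finite ({u. f u \<noteq> 0 \<and> ord (f u) < N} \<union> {u. g u \<noteq> 0 \<and> ord (g u) < N})" for N
    using f g by (simp add: A0_def)
  ultimately have "finite {u. psadd f g u \<noteq> 0 \<and> ord (psadd f g u) < N}" for N
    by (rule finite_subset)
  then show ?thesis using f g
    unfolding A0_def by (auto simp: is_ps_def psadd_def)
qed
lemma A0_smult: "f \<in> A0 n ord \<Longrightarrow> pssmult a f \<in> A0 n ord"
proof -
  assume f: "f \<in> A0 n ord"
  have "{u. pssmult a f u \<noteq> 0 \<and> ord (pssmult a f u) < N} \<subseteq> {u. f u \<noteq> 0 \<and> ord (f u) < N}" for N
    by (auto simp: pssmult_def ord_mult)
  moreover have "finite {u. f u \<noteq> 0 \<and> ord (f u) < N}" for N using f by (simp add: A0_def)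
  ultimately have "finite {u. pssmult a f u \<noteq> 0 \<and> ord (pssmult a f u) < N}" for N
    by (rule finite_subset)
  then show ?thesis using f unfolding A0_def by (auto simp: is_ps_def pssmult_def)
qed


lemmas fl_parts = fl[unfolded frob_lift_def, THEN conjunct1]
  fl[unfolded frob_lift_def, THEN conjunct2, THEN conjunct1]
  fl[unfolded frob_lift_def, THEN conjunct2, THEN conjunct2, THEN conjunct1]
  fl[unfolded frob_lift_def, THEN conjunct2, THEN conjunct2, THEN conjunct2, THEN conjunct1]
  fl[unfolded frob_lift_def, THEN conjunct2, THEN conjunct2, THEN conjunct2, THEN conjunct2, THEN conjunct1]
  fl[unfolded frob_lift_def, THEN conjunct2, THEN conjunct2, THEN conjunct2, THEN conjunct2, THEN conjunct2, THEN conjunct1]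
  fl[unfolded frob_lift_def, THEN conjunct2, THEN conjunct2, THEN conjunct2, THEN conjunct2, THEN conjunct2, THEN conjunct2]

lemma sig_A0: "f \<in> A0 n ord \<Longrightarrow> \<sigma> f \<in> A0 n ord" using fl_parts(1) by blast
lemma sig_add: "f \<in> A0 n ord \<Longrightarrow> g \<in> A0 n ord \<Longrightarrow> \<sigma> (psadd f g) = psadd (\<sigma> f) (\<sigma> g)"
  using fl_parts(2) by blast
lemma sig_mult: "f \<in> A0 n ord \<Longrightarrow> g \<in> A0 n ord \<Longrightarrow> \<sigma> (psmult f g) = psmult (\<sigma> f) (\<sigma> g)"
  using fl_parts(3) by blast
lemma sig_smult: "f \<in> A0 n ord \<Longrightarrow> \<sigma> (pssmult c f) = pssmult c (\<sigma> f)"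
  using fl_parts(4) by blast
lemma sig_var: "i < n \<Longrightarrow> \<sigma> (var i) = psadd (mono (\<lambda>j. if j = i then q else 0)) (pssmult \<pi> (fs i))"
  using fl_parts(7) by blast
lemma pifs_L: "i < n \<Longrightarrow> pssmult \<pi> (fs i) \<in> Lr n ord (real_of_rat b\<sigma>) 0"
  using fl_parts(7) L_Lr[of n ord b\<sigma> 0] by auto

lemma mono_A0: "u \<in> exps n \<Longrightarrow> mono u \<in> A0 n ord"
  using Lr_A0[OF _ mono_Lr[of u 1]] by simp
lemma const1_A0: "const 1 \<in> A0 n ord"
proof -
  have "(\<lambda>_. 0::nat) \<in> exps n" by (simp add: exps_def)
  moreover have "const 1 = (mono (\<lambda>_. 0::nat) :: 'r ps)" by (simp add: const_def Defs.mono_def)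
  ultimately show ?thesis using mono_A0 by simp
qed
lemma zero_A0: "(\<lambda>_. 0) \<in> A0 n ord"
  using A0_smult[OF const1_A0, of 0] by (simp add: pssmult_def)
lemma sig_zero: "\<sigma> (\<lambda>_. 0) = (\<lambda>_. 0)"
proof -
  have "(\<lambda>_. 0) = pssmult 0 (const (1::'r))" by (simp add: pssmult_def)
  then show ?thesis using sig_smult[OF const1_A0, of 0] by (simp add: pssmult_def)
qed
lemma A0_diff: "f \<in> A0 n ord \<Longrightarrow> g \<in> A0 n ord \<Longrightarrow> (\<lambda>v. f v - g v) \<in> A0 n ord"
  using A0_add[of f "pssmult (-1) g"] A0_smult[of g "-1"] by (simp add: psadd_def pssmult_def)
lemma sig_diff: "f \<in> A0 n ord \<Longrightarrow> g \<in> A0 n ord \<Longrightarrow> \<sigma> (\<lambda>v. f v - g v) = (\<lambda>v. \<sigma> f v - \<sigma> g v)"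
proof -
  assume f: "f \<in> A0 n ord" and g: "g \<in> A0 n ord"
  have "(\<lambda>v. f v - g v) = psadd f (pssmult (-1) g)" by (simp add: psadd_def pssmult_def)
  then have "\<sigma> (\<lambda>v. f v - g v) = psadd (\<sigma> f) (pssmult (-1) (\<sigma> g))"
    using sig_add[OF f A0_smult[OF g]] sig_smult[OF g] by simp
  then show ?thesis by (simp add: psadd_def pssmult_def)
qed
lemma A0_sum: "finite T \<Longrightarrow> (\<And>s. s \<in> T \<Longrightarrow> h s \<in> A0 n ord) \<Longrightarrow> (\<lambda>v. \<Sum>s\<in>T. h s v) \<in> A0 n ord"
proof (induction T rule: finite_induct)
  case empty then show ?case using zero_A0 by simp
next
  case (insert x F)
  have "(\<lambda>v. \<Sum>s\<in>insert x F. h s v) = psadd (h x) (\<lambda>v. \<Sum>s\<in>F. h s v)"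
    using insert by (simp add: psadd_def)
  then show ?case using insert A0_add by simp
qed
lemma sig_sum: "finite T \<Longrightarrow> (\<And>s. s \<in> T \<Longrightarrow> h s \<in> A0 n ord) \<Longrightarrow>
    \<sigma> (\<lambda>v. \<Sum>s\<in>T. h s v) = (\<lambda>v. \<Sum>s\<in>T. \<sigma> (h s) v)"
proof (induction T rule: finite_induct)
  case empty then show ?case using sig_zero by simp
next
  case (insert x F)
  have "(\<lambda>v. \<Sum>s\<in>insert x F. h s v) = psadd (h x) (\<lambda>v. \<Sum>s\<in>F. h s v)"
    using insert by (simp add: psadd_def)
  moreover have "(\<lambda>v. \<Sum>s\<in>F. h s v) \<in> A0 n ord" using insert(4) A0_sum[OF insert(1)] by simp
  ultimately show ?case using insert sig_add[of "h x" "(\<lambda>v. \<Sum>s\<in>F. h s v)"] by (simp add: psadd_def)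
qed

lemma psmult_diff_left: "psmult (\<lambda>v. f v - g v) h = (\<lambda>u. psmult f h u - psmult g h u)"
  unfolding psmult_def by (simp add: algebra_simps sum_subtractf)
lemma psmult_diff_right: "psmult h (\<lambda>v. f v - g v) = (\<lambda>u. psmult h f u - psmult h g u)"
  unfolding psmult_def by (simp add: algebra_simps sum_subtractf)
lemma psmult_sum_left: "psmult (\<lambda>v. \<Sum>s\<in>T. f s v) h = (\<lambda>u. \<Sum>s\<in>T. psmult (f s) h u)"
  unfolding psmult_def by (simp add: sum_distrib_right sum.swap[of _ T])
lemma psmult_smult_left: "psmult (pssmult a f) h = pssmult a (psmult f h)"
  unfolding psmult_def pssmult_def by (simp add: sum_distrib_left algebra_simps)
lemma psmult_add_left: "psmult (psadd f g) h = psadd (psmult f h) (psmult g h)"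
  unfolding psmult_def psadd_def by (simp add: algebra_simps sum.distrib)

lemma mono_mult: assumes a: "a \<in> exps n" and b: "b \<in> exps n"
  shows "psmult (mono a) (mono b) = (mono (\<lambda>i. a i + b i) :: 'r ps)"
proof
  fix u
  show "psmult (mono a) (mono b) u = (mono (\<lambda>i. a i + b i) :: 'r ps) u"
  proof (cases "u = (\<lambda>i. a i + b i)")
    case True
    then have ue: "u \<in> exps n" using a b by (auto simp: exps_def)
    have "psmult (mono a) (mono b) u = (\<Sum>v\<in>{v. \<forall>i. v i \<le> u i}. if v = a then 1 else 0)"
      unfolding psmult_def Defs.mono_def
      using True by (intro sum.cong refl) auto
    also have "\<dots> = 1" using finite_le[OF ue] True by (simp add: sum.delta')
    finally show ?thesis using True by (simp add: Defs.mono_def)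
  next
    case False
    have "\<forall>v\<in>{v. \<forall>i. v i \<le> u i}. (mono a v :: 'r) * mono b (\<lambda>i. u i - v i) = 0"
    proof
      fix v assume v: "v \<in> {v. \<forall>i. v i \<le> u i}"
      have "\<not> (v = a \<and> (\<lambda>i. u i - v i) = b)"
      proof
        assume h: "v = a \<and> (\<lambda>i. u i - v i) = b"
        have "u = (\<lambda>i. a i + b i)"
        proof
          fix i show "u i = a i + b i" using v h fun_cong[of "\<lambda>i. u i - v i" b i] by auto
        qed
        then show False using False by simp
      qed
      then show "(mono a v :: 'r) * mono b (\<lambda>i. u i - v i) = 0" by (auto simp: Defs.mono_def)
    qed
    then have "psmult (mono a) (mono b) u = (0::'r)" unfolding psmult_def by (intro sum.neutral) blast
    then show ?thesis using False by (simp add: Defs.mono_def)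
  qed
qed

definition Pd :: "'r ps \<Rightarrow> bool" where "Pd h \<longleftrightarrow> (\<forall>v. \<pi> dvd h v)"
lemma Pd_diff: "Pd f \<Longrightarrow> Pd g \<Longrightarrow> Pd (\<lambda>v. f v - g v)" unfolding Pd_def by auto
lemma Pd_add: "Pd f \<Longrightarrow> Pd g \<Longrightarrow> Pd (\<lambda>v. f v + g v)" unfolding Pd_def by auto
lemma Pd_sum: "(\<And>s. s \<in> T \<Longrightarrow> Pd (h s)) \<Longrightarrow> Pd (\<lambda>v. \<Sum>s\<in>T. h s v)"
  unfolding Pd_def by (auto intro: dvd_sum)
lemma Pd_mult_left: "Pd f \<Longrightarrow> Pd (psmult f g)"
  unfolding Pd_def psmult_def by (auto intro!: dvd_sum)
lemma Pd_mult_right: "Pd g \<Longrightarrow> Pd (psmult f g)"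
  unfolding Pd_def psmult_def by (auto intro!: dvd_sum)
lemma Pd_smult: "Pd f \<Longrightarrow> Pd (pssmult a f)" unfolding Pd_def pssmult_def by auto
lemma Pd_pi: "Pd (pssmult \<pi> f)" unfolding Pd_def pssmult_def by auto


definition ev :: "nat \<Rightarrow> nat \<Rightarrow> nat" where "ev i = (\<lambda>j. if j = i then 1 else 0)"

lemma ev_exps: "i < n \<Longrightarrow> ev i \<in> exps n" by (auto simp: ev_def exps_def)
lemma deg_ev: "i < n \<Longrightarrow> deg n (ev i) = 1" by (simp add: ev_def deg_def)
lemma deg_plus: "deg n (\<lambda>j. a j + b j) = deg n a + deg n b" by (simp add: deg_def sum.distrib)
lemma deg_qmult: "deg n (\<lambda>j. q * a j) = q * deg n a" by (simp add: deg_def sum_distrib_left)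
lemma var_ev: "var i = mono (ev i)" by (simp add: var_def ev_def)

lemma sig_mono_ind:
  assumes b: "0 < b" "b \<le> real_of_rat b\<sigma>"
  shows "\<forall>w\<in>exps n. deg n w = k \<longrightarrow>
     \<sigma> (mono w) \<in> Lr n ord b (- (real q * b) * real (deg n w)) \<and>
     Pd (\<lambda>v. \<sigma> (mono w) v - mono (\<lambda>i. q * w i) v)"
proof (induction k)
  case 0
  show ?case
  proof (intro ballI impI)
    fix w assume w: "w \<in> exps n" "deg n w = 0"
    have "w = (\<lambda>_. 0)"
    proof
      fix i show "w i = 0"
      proof (cases "i < n")
        case True
        then have "w i \<le> deg n w" unfolding deg_def by (intro member_le_sum) auto
        then show ?thesis using w by simp
      qed (use w in \<open>auto simp: exps_def\<close>)
    qed
    moreover have "const 1 = (mono (\<lambda>_. 0::nat) :: 'r ps)" by (simp add: const_def Defs.mono_def)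
    moreover have "(\<lambda>_. 0::nat) \<in> exps n" by (simp add: exps_def)
    ultimately show "\<sigma> (mono w) \<in> Lr n ord b (- (real q * b) * real (deg n w)) \<and>
     Pd (\<lambda>v. \<sigma> (mono w) v - mono (\<lambda>i. q * w i) v)"
      using fl_parts(5) mono_Lr[of "\<lambda>_. 0" b] w by (auto simp: Pd_def deg_def)
  qed
next
  case (Suc k)
  show ?case
  proof (intro ballI impI)
    fix w assume w: "w \<in> exps n" "deg n w = Suc k"
    obtain i where i: "i < n" "w i > 0"
    proof -
      have "\<exists>i<n. w i > 0"
      proof (rule ccontr)
        assume "\<not> (\<exists>i<n. w i > 0)"
        then have "deg n w = 0" by (simp add: deg_def)
        then show False using w by simp
      qed
      then show ?thesis using that by blast
    qed
    define w' where "w' = w(i := w i - 1)"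
    have w'e: "w' \<in> exps n" using w i by (auto simp: w'_def exps_def)
    have ww: "w = (\<lambda>j. w' j + ev i j)" using i by (auto simp: w'_def ev_def)
    have dw: "deg n w = deg n w' + 1" using deg_plus[of w' "ev i"] deg_ev[OF i(1)] ww by simp
    then have dw': "deg n w' = k" using w by simp
    have IH: "\<sigma> (mono w') \<in> Lr n ord b (- (real q * b) * real (deg n w'))"
        "Pd (\<lambda>v. \<sigma> (mono w') v - mono (\<lambda>i. q * w' i) v)"
      using Suc.IH w'e dw' by auto
    have mw: "(mono w :: 'r ps) = psmult (mono w') (var i)"
      using mono_mult[OF w'e ev_exps[OF i(1)]] ww by (simp add: var_ev)
    have sw: "\<sigma> (mono w) = psmult (\<sigma> (mono w')) (\<sigma> (var i))"
      using mw sig_mult[OF mono_A0[OF w'e], of "var i"] mono_A0[OF ev_exps[OF i(1)]] by (simp add: var_ev)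
    define Xi where "Xi = (mono (\<lambda>j. if j = i then q else 0) :: 'r ps)"
    have qe: "(\<lambda>j. if j = i then q else 0) = (\<lambda>j. q * ev i j)" by (auto simp: ev_def)
    have qee: "(\<lambda>j. q * ev i j) \<in> exps n" using i by (auto simp: ev_def exps_def)
    have sv: "\<sigma> (var i) = psadd Xi (pssmult \<pi> (fs i))" using sig_var[OF i(1)] Xi_def by simp
    have XiL: "Xi \<in> Lr n ord b (- (real q * b))"
      using mono_Lr[OF qee, of b] deg_qmult[of "ev i"] deg_ev[OF i(1)] qe Xi_def
      by (simp add: algebra_simps)
    have fL: "pssmult \<pi> (fs i) \<in> Lr n ord b (- (real q * b))"
      using Lr_anti[OF pifs_L[OF i(1)] b(2)] b q_pos by simp
    have svL: "\<sigma> (var i) \<in> Lr n ord b (- (real q * b))" using sv Lr_add[OF XiL fL] by simp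
    have L1: "\<sigma> (mono w) \<in> Lr n ord b (- (real q * b) * real (deg n w') + - (real q * b))"
      using sw Lr_mult[OF IH(1) svL] by simp
    have "- (real q * b) * real (deg n w') + - (real q * b) = - (real q * b) * real (deg n w)"
      using dw by (simp add: algebra_simps)
    then have L2: "\<sigma> (mono w) \<in> Lr n ord b (- (real q * b) * real (deg n w))" using L1 by simp
    define M where "M = (mono (\<lambda>j. q * w' j) :: 'r ps)"
    have Me: "(\<lambda>j. q * w' j) \<in> exps n" using w'e by (auto simp: exps_def)
    have mq: "(mono (\<lambda>j. q * w j) :: 'r ps) = psmult M Xi"
    proof -
      have "(\<lambda>j. q * w j) = (\<lambda>j. q * w' j + (if j = i then q else 0))"
        using ww by (auto simp: ev_def algebra_simps)
      then show ?thesis using mono_mult[OF Me, of "\<lambda>j. if j = i then q else 0"] qe qee M_def Xi_def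
        by simp
    qed
    have dec: "(\<lambda>v. \<sigma> (mono w) v - mono (\<lambda>i. q * w i) v) =
       (\<lambda>u. psmult (\<lambda>v. \<sigma> (mono w') v - M v) (\<sigma> (var i)) u + psmult M (\<lambda>v. \<sigma> (var i) v - Xi v) u)"
      unfolding sw mq psmult_diff_left psmult_diff_right by (simp add: algebra_simps)
    have P1: "Pd (psmult (\<lambda>v. \<sigma> (mono w') v - M v) (\<sigma> (var i)))"
      using IH(2) M_def by (intro Pd_mult_left) simp
    have "(\<lambda>v. \<sigma> (var i) v - Xi v) = pssmult \<pi> (fs i)" using sv by (simp add: psadd_def)
    then have P2: "Pd (psmult M (\<lambda>v. \<sigma> (var i) v - Xi v))" using Pd_pi by (intro Pd_mult_right) simp
    show "\<sigma> (mono w) \<in> Lr n ord b (- (real q * b) * real (deg n w)) \<and>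
     Pd (\<lambda>v. \<sigma> (mono w) v - mono (\<lambda>i. q * w i) v)"
      using L2 Pd_add[OF P1 P2] dec by simp
  qed
qed


lemma box_exps: "box n q \<subseteq> exps n" by (auto simp: box_def)
lemma finite_box: "finite (box n q)"
proof -
  have "box n q \<subseteq> {u \<in> exps n. deg n u \<le> n * q}"
  proof
    fix u assume u: "u \<in> box n q"
    have "deg n u \<le> (\<Sum>i<n. q)" unfolding deg_def
      using u by (intro sum_mono) (auto simp: box_def less_imp_le)
    then show "u \<in> {u \<in> exps n. deg n u \<le> n * q}" using u by (auto simp: box_def)
  qed
  then show ?thesis using finite_exps_deg finite_subset by blast
qed
lemma split_uniq:
  assumes u: "u \<in> box n q" and v: "v = (\<lambda>i. q * w i + u i)"
  shows "u = (\<lambda>i. v i mod q) \<and> w = (\<lambda>i. v i div q)"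
proof -
  have "u i < q" for i
  proof (cases "i < n")
    case True then show ?thesis using u by (auto simp: box_def)
  next
    case False then have "u i = 0" using u by (auto simp: box_def exps_def)
    then show ?thesis using q_pos by simp
  qed
  then show ?thesis using v q_pos by auto
qed
lemma split_exists:
  assumes v: "v \<in> exps n"
  shows "(\<lambda>i. v i mod q) \<in> box n q" "(\<lambda>i. v i div q) \<in> exps n"
    "v = (\<lambda>i. q * (v i div q) + v i mod q)"
  using v q_pos by (auto simp: box_def exps_def)
lemma qwu_exps: "u \<in> exps n \<Longrightarrow> w \<in> exps n \<Longrightarrow> (\<lambda>i. q * w i + u i) \<in> exps n"
  by (auto simp: exps_def)
lemma deg_qwu: "deg n (\<lambda>i. q * w i + u i) = q * deg n w + deg n u"
  using deg_plus[of "\<lambda>i. q * w i" u] deg_qmult[of w] by simp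
lemma zero_Lr: "(\<lambda>_. 0) \<in> Lr n ord b c" by (simp add: Lr_def is_ps_def)


lemma key:
  assumes b: "0 < b" "b \<le> real_of_rat b\<sigma>" and f: "f \<in> Lr n ord b c"
  shows "\<exists>R' g0. R' \<in> Lr n ord b (c - 1) \<and>
     (\<forall>u\<in>box n q. g0 u \<in> A0 n ord \<and> (\<forall>w\<in>exps n. big ord (real q * b * real (deg n w) + c) (g0 u w))) \<and>
     (\<forall>g'. decomp n ord q \<sigma> R' g' \<longrightarrow>
        decomp n ord q \<sigma> f (\<lambda>u. if u \<in> box n q then psadd (g0 u) (pssmult \<pi> (g' u)) else (\<lambda>_. 0)))"
proof -
  have qp: "real q > 0" using q_pos by simp
  obtain D :: nat where D: "(1 - c) / (b * real q) \<le> real D" using real_arch_simple by blast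
  define W where "W = {w \<in> exps n. deg n w \<le> D}"
  have finW: "finite W" using finite_exps_deg W_def by simp
  have finBW: "finite (box n q \<times> W)" using finW finite_box by simp
  define a where "a u w = f (\<lambda>i. q * w i + u i)" for u w
  define tt where "tt u w = pssmult (a u w) (psmult (\<sigma> (mono w)) (mono u))" for u w
  define mm where "mm u w = pssmult (a u w) (mono (\<lambda>i. q * w i + u i))" for u w
  define dd where "dd u w = pssmult (a u w) (psmult (\<lambda>x. \<sigma> (mono w) x - mono (\<lambda>i. q * w i) x) (mono u))" for u w
  define T where "T = (\<lambda>v. \<Sum>p\<in>box n q \<times> W. tt (fst p) (snd p) v)"
  define Mq where "Mq = (\<lambda>v. \<Sum>p\<in>box n q \<times> W. mm (fst p) (snd p) v)"
  define R where "R = (\<lambda>v. f v - T v)"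
  have fps: "is_ps n f" using f by (simp add: Lr_def)
  have fbig: "\<And>v. v \<in> exps n \<Longrightarrow> big ord (b * real (deg n v) + c) (f v)" using f by (simp add: Lr_def)
  have abig: "big ord (b * (real q * real (deg n w) + real (deg n u)) + c) (a u w)"
    if "u \<in> exps n" "w \<in> exps n" for u w
    using fbig[OF qwu_exps[OF that]] deg_qwu[of w u] by (simp add: a_def)
  have abig2: "big ord (real q * b * real (deg n w) + c) (a u w)"
    if "u \<in> exps n" "w \<in> exps n" for u w
    using abig[OF that] b by (elim big_mono) (simp add: algebra_simps)
  have TL: "T \<in> Lr n ord b c" unfolding T_def
  proof (rule Lr_sum[OF finBW])
    fix p assume p: "p \<in> box n q \<times> W"
    obtain u w where uw: "p = (u, w)" by (cases p)
    have ue: "u \<in> exps n" and we: "w \<in> exps n" using p uw box_exps W_def by auto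
    have P: "psmult (\<sigma> (mono w)) (mono u) \<in> Lr n ord b (- (real q * b) * real (deg n w) + - b * real (deg n u))"
      using Lr_mult[OF sig_mono_ind[OF b, rule_format, OF we refl, THEN conjunct1] mono_Lr[OF ue]] .
    have "tt u w \<in> Lr n ord b c"
    proof (cases "a u w = 0")
      case True then show ?thesis using zero_Lr by (simp add: pssmult_def tt_def)
    next
      case False
      have "b * (real q * real (deg n w) + real (deg n u)) + c \<le> real (ord (a u w))"
        using abig[OF ue we] False by (simp add: big_def)
      then have "c \<le> - (real q * b) * real (deg n w) + - b * real (deg n u) + real (ord (a u w))"
        by (simp add: algebra_simps)
      then show ?thesis using Lr_anti[OF Lr_smult[OF P False] order_refl] by (simp add: tt_def)
    qed
    then show "tt (fst p) (snd p) \<in> Lr n ord b c"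
      using uw by simp
  qed
  have RL: "R \<in> Lr n ord b c" unfolding R_def by (rule Lr_diff[OF f TL])
  have P1: "Pd (\<lambda>v. T v - Mq v)"
  proof -
    have "(\<lambda>v. T v - Mq v) = (\<lambda>v. \<Sum>p\<in>box n q \<times> W. dd (fst p) (snd p) v)"
    proof
      fix v
      have "T v - Mq v = (\<Sum>p\<in>box n q \<times> W. tt (fst p) (snd p) v - mm (fst p) (snd p) v)"
        unfolding T_def Mq_def by (simp add: sum_subtractf)
      also have "\<dots> = (\<Sum>p\<in>box n q \<times> W. dd (fst p) (snd p) v)"
      proof (intro sum.cong refl)
        fix p assume p: "p \<in> box n q \<times> W"
        obtain u w where uw: "p = (u, w)" by (cases p)
        have ue: "u \<in> exps n" and we: "w \<in> exps n" using p uw box_exps W_def by auto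
        have qwe: "(\<lambda>i. q * w i) \<in> exps n" using we by (auto simp: exps_def)
        have "(mono (\<lambda>i. q * w i + u i) :: 'r ps) = psmult (mono (\<lambda>i. q * w i)) (mono u)"
          using mono_mult[OF qwe ue] by simp
        then show "tt (fst p) (snd p) v - mm (fst p) (snd p) v = dd (fst p) (snd p) v"
          using uw by (simp add: tt_def mm_def dd_def psmult_diff_left pssmult_def algebra_simps)
      qed
      finally show "T v - Mq v = (\<Sum>p\<in>box n q \<times> W. dd (fst p) (snd p) v)" .
    qed
    moreover have "Pd (\<lambda>v. \<Sum>p\<in>box n q \<times> W. dd (fst p) (snd p) v)"
    proof (rule Pd_sum)
      fix p assume p: "p \<in> box n q \<times> W"
      obtain u w where uw: "p = (u, w)" by (cases p)
      have we: "w \<in> exps n" using p uw W_def by auto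
      show "Pd (dd (fst p) (snd p))" using uw sig_mono_ind[OF b, rule_format, OF we refl, THEN conjunct2]
        by (simp add: dd_def Pd_smult Pd_mult_left)
    qed
    ultimately show ?thesis by simp
  qed
  have P2: "Pd (\<lambda>v. f v - Mq v)"
    unfolding Pd_def
  proof
    fix v :: "nat \<Rightarrow> nat"
    define u0 where "u0 = (\<lambda>i. v i mod q)"
    define w0 where "w0 = (\<lambda>i. v i div q)"
    have v0: "v = (\<lambda>i. q * w0 i + u0 i)" using q_pos by (auto simp: u0_def w0_def)
    have "Mq v = (\<Sum>p\<in>box n q \<times> W. if p = (u0, w0) then a u0 w0 else 0)"
      unfolding Mq_def
    proof (intro sum.cong refl)
      fix p assume p: "p \<in> box n q \<times> W"
      obtain u w where uw: "p = (u, w)" by (cases p)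
      have ub: "u \<in> box n q" using p uw by auto
      have "(v = (\<lambda>i. q * w i + u i)) \<longleftrightarrow> (u = u0 \<and> w = w0)"
        using split_uniq[OF ub] v0 u0_def w0_def by metis
      then show "mm (fst p) (snd p) v = (if p = (u0, w0) then a u0 w0 else 0)"
        using uw by (auto simp: mm_def pssmult_def Defs.mono_def)
    qed
    also have "\<dots> = (if (u0, w0) \<in> box n q \<times> W then f v else 0)"
      using finBW v0 by (simp add: a_def)
    finally have Mv: "Mq v = (if (u0, w0) \<in> box n q \<times> W then f v else 0)" .
    show "\<pi> dvd f v - Mq v"
    proof (cases "(u0, w0) \<in> box n q \<times> W")
      case True then show ?thesis using Mv by simp
    next
      case False
      show ?thesis
      proof (cases "v \<in> exps n \<and> f v \<noteq> 0")
        case False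
        then have "f v = 0" using fps by (auto simp: is_ps_def)
        then show ?thesis using Mv by simp
      next
        case True
        then have ve: "v \<in> exps n" and fnz: "f v \<noteq> 0" by auto
        have "u0 \<in> box n q" "w0 \<in> exps n" using split_exists[OF ve] u0_def w0_def by auto
        then have dw: "deg n w0 > D" using False W_def by auto
        have "deg n v = q * deg n w0 + deg n u0" using v0 deg_qwu by metis
        then have "real (deg n v) \<ge> real q * real (deg n w0)" by simp
        moreover have "real (deg n w0) \<ge> real D + 1" using dw by simp
        ultimately have "real (deg n v) \<ge> real q * (real D + 1)"
          by (smt (verit, ccfv_SIG) mult_left_mono of_nat_0_le_iff)
        then have "b * real (deg n v) \<ge> b * (real q * (real D + 1))"
          using b by (simp add: mult_left_mono)
        moreover have "b * (real q * real D) \<ge> 1 - c"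
          using D b qp by (simp add: field_simps)
        moreover have "b * real q > 0" using b qp by simp
        ultimately have "b * real (deg n v) + c \<ge> 1" by (simp add: algebra_simps)
        then have "real (ord (f v)) \<ge> 1" using fbig[OF ve] fnz by (auto simp: big_def)
        then have "\<pi> dvd f v" using pi_dvd fnz by simp
        then show ?thesis using Mv False by simp
      qed
    qed
  qed
  have PR: "Pd R"
  proof -
    have "R = (\<lambda>v. (f v - Mq v) - (T v - Mq v))" unfolding R_def by simp
    then show ?thesis using Pd_diff[OF P2 P1] by simp
  qed
  define R' where "R' = (\<lambda>v. SOME r. R v = \<pi> * r)"
  have RR: "R v = \<pi> * R' v" for v
  proof -
    have "\<exists>r. R v = \<pi> * r" using PR by (auto simp: Pd_def dvd_def)
    then show ?thesis unfolding R'_def by (rule someI_ex)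
  qed
  have R'L: "R' \<in> Lr n ord b (c - 1)"
  proof -
    have "is_ps n R'"
      unfolding is_ps_def
    proof (intro allI impI)
      fix v assume "v \<notin> exps n"
      then have "R v = 0" using RL by (auto simp: Lr_def is_ps_def)
      then show "R' v = 0" using RR[of v] pi_nz by simp
    qed
    moreover have "big ord (b * real (deg n v) + (c - 1)) (R' v)" if v: "v \<in> exps n" for v
    proof (cases "R' v = 0")
      case False
      then have "R v \<noteq> 0" using RR[of v] pi_nz by simp
      then have "b * real (deg n v) + c \<le> real (ord (R v))" using RL v by (auto simp: Lr_def big_def)
      moreover have "ord (R v) = 1 + ord (R' v)" using RR[of v] ord_mult[OF pi_nz False] ord_pi by simp
      ultimately show ?thesis by (simp add: big_def)
    qed simp
    ultimately show ?thesis by (simp add: Lr_def)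
  qed
  define g0 where "g0 u = (\<lambda>v. \<Sum>w\<in>W. pssmult (a u w) (mono w) v)" for u
  have termA0: "pssmult (a u w) (mono w) \<in> A0 n ord" if "w \<in> W" for u w
    using that W_def by (auto intro!: A0_smult mono_A0)
  have g0A0: "g0 u \<in> A0 n ord" for u
    unfolding g0_def using termA0 finW by (intro A0_sum) auto
  have g0val: "g0 u w = (if w \<in> W then a u w else 0)" for u w
  proof -
    have "g0 u w = (\<Sum>w'\<in>W. if w' = w then a u w else 0)"
      unfolding g0_def by (intro sum.cong refl) (auto simp: pssmult_def Defs.mono_def)
    then show ?thesis using finW by simp
  qed
  have g0big: "\<forall>w\<in>exps n. big ord (real q * b * real (deg n w) + c) (g0 u w)" if "u \<in> box n q" for u
    using that box_exps abig2 g0val by auto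
  have sg0: "\<sigma> (g0 u) = (\<lambda>v. \<Sum>w\<in>W. pssmult (a u w) (\<sigma> (mono w)) v)" for u
    unfolding g0_def using sig_sum[OF finW, of "\<lambda>w. pssmult (a u w) (mono w)"] termA0
      sig_smult[OF mono_A0] W_def by auto
  have main: "\<forall>g'. decomp n ord q \<sigma> R' g' \<longrightarrow>
        decomp n ord q \<sigma> f (\<lambda>u. if u \<in> box n q then psadd (g0 u) (pssmult \<pi> (g' u)) else (\<lambda>_. 0))"
  proof (intro allI impI)
    fix g' assume dg: "decomp n ord q \<sigma> R' g'"
    have g'A0: "u \<in> box n q \<Longrightarrow> g' u \<in> A0 n ord" for u using dg by (simp add: decomp_def)
    have R'eq: "R' = (\<lambda>w. \<Sum>u\<in>box n q. psmult (\<sigma> (g' u)) (mono u) w)" using dg by (simp add: decomp_def)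
    define G where "G = (\<lambda>u. if u \<in> box n q then psadd (g0 u) (pssmult \<pi> (g' u)) else (\<lambda>_. 0))"
    have GA0: "u \<in> box n q \<Longrightarrow> G u \<in> A0 n ord" for u
      unfolding G_def using g0A0 g'A0 by (auto intro: A0_add A0_smult)
    have termeq: "psmult (\<sigma> (G u)) (mono u) v =
        (\<Sum>w\<in>W. pssmult (a u w) (psmult (\<sigma> (mono w)) (mono u)) v) + \<pi> * psmult (\<sigma> (g' u)) (mono u) v"
      if u: "u \<in> box n q" for u v
    proof -
      have "\<sigma> (G u) = psadd (\<sigma> (g0 u)) (pssmult \<pi> (\<sigma> (g' u)))"
        unfolding G_def using u sig_add[OF g0A0 A0_smult[OF g'A0[OF u]]] sig_smult[OF g'A0[OF u]] by simp
      then have "psmult (\<sigma> (G u)) (mono u) = psadd (psmult (\<sigma> (g0 u)) (mono u)) (pssmult \<pi> (psmult (\<sigma> (g' u)) (mono u)))"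
        by (simp add: psmult_add_left psmult_smult_left)
      moreover have "psmult (\<sigma> (g0 u)) (mono u) = (\<lambda>v. \<Sum>w\<in>W. pssmult (a u w) (psmult (\<sigma> (mono w)) (mono u)) v)"
        unfolding sg0 psmult_sum_left psmult_smult_left by simp
      ultimately show ?thesis by (simp add: psadd_def pssmult_def)
    qed
    have "f = (\<lambda>w. \<Sum>u\<in>box n q. psmult (\<sigma> (G u)) (mono u) w)"
    proof
      fix v
      have "(\<Sum>u\<in>box n q. psmult (\<sigma> (G u)) (mono u) v) =
          (\<Sum>u\<in>box n q. \<Sum>w\<in>W. pssmult (a u w) (psmult (\<sigma> (mono w)) (mono u)) v) +
          \<pi> * (\<Sum>u\<in>box n q. psmult (\<sigma> (g' u)) (mono u) v)"
        using termeq by (simp add: sum.distrib sum_distrib_left)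
      also have "\<dots> = T v + \<pi> * R' v"
        unfolding T_def R'eq tt_def by (simp add: sum.cartesian_product case_prod_beta)
      also have "\<dots> = f v" using RR[of v] unfolding R_def by (metis add.commute diff_add_cancel)
      finally show "f v = (\<Sum>u\<in>box n q. psmult (\<sigma> (G u)) (mono u) v)" by simp
    qed
    then show "decomp n ord q \<sigma> f G" unfolding decomp_def using GA0 G_def by auto
  qed
  show ?thesis using R'L g0A0 g0big main by blast
qed


lemma Theta_eq: "f \<in> A0 n ord \<Longrightarrow> decomp n ord q \<sigma> f G \<Longrightarrow> Theta n ord q \<sigma> u f = G u"
proof -
  assume f: "f \<in> A0 n ord" and d: "decomp n ord q \<sigma> f G"
  have ex1: "\<exists>!g. decomp n ord q \<sigma> f g" using free f by blast
  have "(THE g. decomp n ord q \<sigma> f g) = G"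
  proof (rule the_equality)
    show "decomp n ord q \<sigma> f G" by (rule d)
  next
    fix g assume "decomp n ord q \<sigma> f g"
    then show "g = G" using ex1 d by blast
  qed
  then show ?thesis by (simp add: Theta_def)
qed

lemma Theta_decomp: "f \<in> A0 n ord \<Longrightarrow> decomp n ord q \<sigma> f (\<lambda>u. Theta n ord q \<sigma> u f)"
proof -
  assume f: "f \<in> A0 n ord"
  have "\<exists>!g. decomp n ord q \<sigma> f g" using free f by blast
  then have "decomp n ord q \<sigma> f (THE g. decomp n ord q \<sigma> f g)" by (rule theI')
  then show ?thesis by (simp add: Theta_def)
qed

lemma bound_ind:
  assumes b: "0 < b" "b \<le> real_of_rat b\<sigma>"
  shows "\<forall>c f. f \<in> Lr n ord b c \<longrightarrow> (\<forall>u\<in>box n q. \<forall>w\<in>exps n.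
     big ord (min (real N) (real q * b * real (deg n w) + c)) (Theta n ord q \<sigma> u f w))"
proof (induction N)
  case 0
  show ?case
  proof (intro allI impI ballI)
    fix c f u w
    show "big ord (min (real 0) (real q * b * real (deg n w) + c)) (Theta n ord q \<sigma> u f w)"
      by (rule big_mono[OF big_ord]) simp
  qed
next
  case (Suc N)
  show ?case
  proof (intro allI impI ballI)
    fix c f u w
    assume f: "f \<in> Lr n ord b c" and u: "u \<in> box n q" and w: "w \<in> exps n"
    obtain R' g0 where R': "R' \<in> Lr n ord b (c - 1)"
      and g0: "\<forall>u\<in>box n q. g0 u \<in> A0 n ord \<and> (\<forall>w\<in>exps n. big ord (real q * b * real (deg n w) + c) (g0 u w))"
      and m: "\<forall>g'. decomp n ord q \<sigma> R' g' \<longrightarrow>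
        decomp n ord q \<sigma> f (\<lambda>u. if u \<in> box n q then psadd (g0 u) (pssmult \<pi> (g' u)) else (\<lambda>_. 0))"
      using key[OF b f] by blast
    have fA: "f \<in> A0 n ord" using Lr_A0[OF b(1) f] .
    have RA: "R' \<in> A0 n ord" using Lr_A0[OF b(1) R'] .
    have "decomp n ord q \<sigma> f (\<lambda>u. if u \<in> box n q then psadd (g0 u) (pssmult \<pi> (Theta n ord q \<sigma> u R')) else (\<lambda>_. 0))"
      using m Theta_decomp[OF RA] by blast
    then have "Theta n ord q \<sigma> u f = psadd (g0 u) (pssmult \<pi> (Theta n ord q \<sigma> u R'))"
      using Theta_eq[OF fA] u by simp
    then have eq: "Theta n ord q \<sigma> u f w = g0 u w + \<pi> * Theta n ord q \<sigma> u R' w"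
      by (simp add: psadd_def pssmult_def)
    have ih: "big ord (min (real N) (real q * b * real (deg n w) + (c - 1))) (Theta n ord q \<sigma> u R' w)"
      using Suc.IH R' u w by blast
    have "big ord (min (real N) (real q * b * real (deg n w) + (c - 1)) + 1) (\<pi> * Theta n ord q \<sigma> u R' w)"
      using big_pi[OF ih] .
    then have h1: "big ord (min (real (Suc N)) (real q * b * real (deg n w) + c)) (\<pi> * Theta n ord q \<sigma> u R' w)"
      by (rule big_mono) (simp add: min_def)
    have "big ord (real q * b * real (deg n w) + c) (g0 u w)" using g0 u w by blast
    then have h2: "big ord (min (real (Suc N)) (real q * b * real (deg n w) + c)) (g0 u w)"
      by (rule big_mono) (rule min.cobounded2)
    show "big ord (min (real (Suc N)) (real q * b * real (deg n w) + c)) (Theta n ord q \<sigma> u f w)"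
      using big_add[OF h2 h1] eq by simp
  qed
qed

lemma bound:
  assumes b: "0 < b" "b \<le> real_of_rat b\<sigma>" and f: "f \<in> Lr n ord b c" and u: "u \<in> box n q"
  shows "Theta n ord q \<sigma> u f \<in> Lr n ord (real q * b) c"
proof -
  have fA: "f \<in> A0 n ord" using Lr_A0[OF b(1) f] .
  have "Theta n ord q \<sigma> u f \<in> A0 n ord" using Theta_decomp[OF fA] u by (simp add: decomp_def)
  then have ps: "is_ps n (Theta n ord q \<sigma> u f)" by (simp add: A0_def)
  have "big ord (real q * b * real (deg n w) + c) (Theta n ord q \<sigma> u f w)" if w: "w \<in> exps n" for w
  proof (cases "Theta n ord q \<sigma> u f w = 0")
    case False
    let ?x = "Theta n ord q \<sigma> u f w"
    have "big ord (min (real (Suc (ord ?x))) (real q * b * real (deg n w) + c)) ?x"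
      using bound_ind[OF b, of "Suc (ord ?x)"] f u w by blast
    then have "min (real (Suc (ord ?x))) (real q * b * real (deg n w) + c) \<le> real (ord ?x)"
      using False by (simp add: big_def)
    then show ?thesis using False by (simp add: big_def min_def split: if_splits)
  qed simp
  then show ?thesis using ps by (simp add: Lr_def)
qed

lemma Lr_A: "\<beta> > 0 \<Longrightarrow> f \<in> Lr n ord \<beta> \<gamma> \<Longrightarrow> f \<in> A n ord"
proof -
  assume be: "\<beta> > 0" and f: "f \<in> Lr n ord \<beta> \<gamma>"
  obtain M :: nat where M: "- 2 * \<gamma> / \<beta> \<le> real M" using real_arch_simple by blast
  have "\<forall>u\<in>exps n. deg n u \<ge> M \<longrightarrow> f u = 0 \<or> real (ord (f u)) \<ge> (\<beta> / 2) * real (deg n u)"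
  proof (intro ballI impI)
    fix u assume u: "u \<in> exps n" and d: "deg n u \<ge> M"
    have "- 2 * \<gamma> / \<beta> \<le> real (deg n u)" using M d by linarith
    then have "- 2 * \<gamma> \<le> \<beta> * real (deg n u)" using be by (simp add: field_simps)
    then have "(\<beta> / 2) * real (deg n u) \<le> \<beta> * real (deg n u) + \<gamma>" by simp
    then show "f u = 0 \<or> real (ord (f u)) \<ge> (\<beta> / 2) * real (deg n u)"
      using f u by (auto simp: Lr_def big_def)
  qed
  then show ?thesis using Lr_A0[OF be f] be unfolding A_def
    by (intro CollectI conjI) (auto intro!: exI[of _ "\<beta> / 2"] exI[of _ M])
qed

lemma A_Lr:
  assumes f: "f \<in> A n ord"
  shows "\<exists>b' c'. 0 < b' \<and> b' \<le> b\<sigma> \<and> f \<in> Lr n ord (real_of_rat b') (real_of_rat c')"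
proof -
  obtain e M where e: "e > 0" and eM: "\<forall>u\<in>exps n. deg n u \<ge> M \<longrightarrow>
       f u = 0 \<or> real (ord (f u)) \<ge> e * real (deg n u)" and fA: "f \<in> A0 n ord"
    using f unfolding A_def by blast
  obtain k :: nat where k: "k > 0" "inverse (real k) < e" using ex_inverse_of_nat_less[OF e] by blast
  define b' where "b' = min b\<sigma> (1 / of_nat k)"
  have bs: "0 < b\<sigma>" using fl_parts(6) .
  have b'pos: "0 < b'" using bs k by (simp add: b'_def)
  have rb: "real_of_rat b' \<le> e"
  proof -
    have "real_of_rat b' \<le> real_of_rat (1 / of_nat k)" by (simp add: b'_def of_rat_less_eq)
    also have "\<dots> = inverse (real k)" by (simp add: of_rat_divide of_rat_inverse divide_inverse)
    finally show ?thesis using k by simp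
  qed
  have rb0: "0 < real_of_rat b'" using b'pos by (simp add: of_rat_less[of 0, simplified])
  define c' where "c' = - b' * of_nat M"
  have rc: "real_of_rat c' = - real_of_rat b' * real M" unfolding c'_def of_rat_minus of_rat_mult of_rat_of_nat_eq by simp
  have "f \<in> Lr n ord (real_of_rat b') (real_of_rat c')"
    unfolding Lr_def
  proof (intro CollectI conjI ballI)
    show "is_ps n f" using fA by (simp add: A0_def)
  next
    fix u assume u: "u \<in> exps n"
    show "big ord (real_of_rat b' * real (deg n u) + real_of_rat c') (f u)"
    proof (cases "deg n u \<ge> M")
      case True
      then have "f u = 0 \<or> real (ord (f u)) \<ge> e * real (deg n u)" using eM u by blast
      moreover have "real_of_rat b' * real (deg n u) \<le> e * real (deg n u)"
        using rb by (simp add: mult_right_mono)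
      moreover have "real_of_rat c' \<le> 0" using rc rb0 by simp
      ultimately show ?thesis unfolding big_def by linarith
    next
      case False
      then have "real (deg n u) \<le> real M" by simp
      then have "real_of_rat b' * real (deg n u) \<le> real_of_rat b' * real M"
        using rb0 by (simp add: mult_left_mono)
      then have "real_of_rat b' * real (deg n u) + real_of_rat c' \<le> 0" using rc by simp
      then show ?thesis unfolding big_def by simp
    qed
  qed
  moreover have "b' \<le> b\<sigma>" by (simp add: b'_def)
  ultimately show ?thesis using b'pos by blast
qed

end

theorem theorem4p5:
  fixes ord :: "'r::{idom,ring_char_0} \<Rightarrow> nat" and \<pi> :: 'r
    and n p q :: nat and \<sigma> :: "'r ps \<Rightarrow> 'r ps" and fs :: "nat \<Rightarrow> 'r ps"
    and b\<sigma> b c :: rat and u :: "nat \<Rightarrow> nat"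
  assumes "cdvr ord \<pi> p q"
    and "n \<ge> 1"
    and "frob_lift n ord \<pi> q \<sigma> fs b\<sigma>"
    and free: "\<forall>f\<in>A0 n ord. \<exists>!g. decomp n ord q \<sigma> f g"
    and "u \<in> box n q"
  shows "(0 < b \<and> b \<le> b\<sigma> \<longrightarrow>
           Theta n ord q \<sigma> u ` L n ord b c \<subseteq> L n ord (of_nat q * b) c)
         \<and> Theta n ord q \<sigma> u ` A n ord \<subseteq> A n ord"
proof -
  interpret Dw n ord \<pi> p q \<sigma> fs b\<sigma>
    using assms by (unfold_locales) auto
  have part1: "Theta n ord q \<sigma> u ` L n ord b' c' \<subseteq> L n ord (of_nat q * b') c'"
    if b': "0 < b'" "b' \<le> b\<sigma>" for b' c'
  proof
    fix g assume "g \<in> Theta n ord q \<sigma> u ` L n ord b' c'"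
    then obtain f where f: "f \<in> L n ord b' c'" and g: "g = Theta n ord q \<sigma> u f" by blast
    have rb: "0 < real_of_rat b'" "real_of_rat b' \<le> real_of_rat b\<sigma>"
      using b' by (simp_all add: of_rat_less[of 0, simplified] of_rat_less_eq)
    have "g \<in> Lr n ord (real q * real_of_rat b') (real_of_rat c')"
      using bound[OF rb f[unfolded L_Lr] assms(5)] g by simp
    then show "g \<in> L n ord (of_nat q * b') c'" by (simp add: L_Lr of_rat_mult)
  qed
  have part2: "Theta n ord q \<sigma> u ` A n ord \<subseteq> A n ord"
  proof
    fix g assume "g \<in> Theta n ord q \<sigma> u ` A n ord"
    then obtain f where f: "f \<in> A n ord" and g: "g = Theta n ord q \<sigma> u f" by blast
    obtain b' c' where b': "0 < b'" "b' \<le> b\<sigma>" and fL: "f \<in> Lr n ord (real_of_rat b') (real_of_rat c')"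
      using A_Lr[OF f] by blast
    have rb: "0 < real_of_rat b'" "real_of_rat b' \<le> real_of_rat b\<sigma>"
      using b' by (simp_all add: of_rat_less[of 0, simplified] of_rat_less_eq)
    have "g \<in> Lr n ord (real q * real_of_rat b') (real_of_rat c')"
      using bound[OF rb fL assms(5)] g by simp
    moreover have "real q * real_of_rat b' > 0" using rb q_pos by simp
    ultimately show "g \<in> A n ord" using Lr_A by blast
  qed
  show ?thesis using part1 part2 by blast
qed

end
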